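(* Let $\mathcal{C}$ be a non-attacking configuration. Then there exists a constant $\mu$ such that $\mathrm{inloss}_n(\mathcal{C}) \le \mu$ for all $n \in \mathbb{N}$.
   Context: For $n \in \mathbb{N}$ let $I_n = \{\lfloor (2-n)/2 \rfloor, \ldots, \lfloor n/2 \rfloor\}$ and $\mathcal{B}_n = I_n \times I_n$. A configuration is a finite set $\mathcal{C} \subset \mathbb{Z}\times\mathbb{Z}$. For $Q=(x,y)$, $A(Q) = \{(x+i,y),(x,y+i),(x+i,y+i),(x+i,y-i) : i \in \mathbb{Z}\setminus\{0\}\}$ and $A(\mathcal{C}) = \bigcup_{Q\in\mathcal{C}} A(Q)$. $\mathcal{C}$ is non-attacking if $Q'\notin A(Q)$ for all distinct $Q,Q'\in\mathcal{C}$. The attacking number of $s \in \mathbb{Z}^2$ is $a_{\mathcal{C}}(s) = \#\{Q \in \mathcal{C} : s \in A(Q)\}$, and the internal loss is $\mathrm{inloss}_n(\mathcal{C}) = \sum_{s \in A(\mathcal{C})\cap\mathcal{B}_n} (a_{\mathcal{C}}(s) - 1)$. *)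

theory Defs
  imports Complex_Main
begin

definition I_set :: "nat \<Rightarrow> int set" where
  "I_set n = {\<lfloor>(2 - real n) / 2\<rfloor> .. \<lfloor>real n / 2\<rfloor>}"

definition board :: "nat \<Rightarrow> (int \<times> int) set" where
  "board n = I_set n \<times> I_set n"

definition attacks :: "int \<times> int \<Rightarrow> (int \<times> int) set" where
  "attacks Q = (case Q of (x, y) \<Rightarrow>
     {(x + i, y) | i. i \<noteq> 0} \<union> {(x, y + i) | i. i \<noteq> 0} \<union>
     {(x + i, y + i) | i. i \<noteq> 0} \<union> {(x + i, y - i) | i. i \<noteq> 0})"

definition attacked :: "(int \<times> int) set \<Rightarrow> (int \<times> int) set" where
  "attacked C = (\<Union>Q\<in>C. attacks Q)"

definition configuration :: "(int \<times> int) set \<Rightarrow> bool" where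
  "configuration C \<longleftrightarrow> finite C"

definition non_attacking :: "(int \<times> int) set \<Rightarrow> bool" where
  "non_attacking C \<longleftrightarrow> (\<forall>Q\<in>C. \<forall>Q'\<in>C. Q \<noteq> Q' \<longrightarrow> Q' \<notin> attacks Q)"

definition attacking_number :: "(int \<times> int) set \<Rightarrow> int \<times> int \<Rightarrow> nat" where
  "attacking_number C s = card {Q \<in> C. s \<in> attacks Q}"

definition inloss :: "nat \<Rightarrow> (int \<times> int) set \<Rightarrow> int" where
  "inloss n C = (\<Sum>s \<in> attacked C \<inter> board n. int (attacking_number C s) - 1)"

end

theory Submission
  imports Defs
begin

lemma att_iff:
  fixes a b x y :: int
  shows "(a,b) \<in> attacks (x,y) \<longleftrightarrow> (a,b) \<noteq> (x,y) \<and> (a = x \<or> b = y \<or> a - b = x - y \<or> a + b = x + y)"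
proof
  assume "(a,b) \<in> attacks (x,y)"
  then show "(a,b) \<noteq> (x,y) \<and> (a = x \<or> b = y \<or> a - b = x - y \<or> a + b = x + y)"
    unfolding attacks_def by auto
next
  assume h: "(a,b) \<noteq> (x,y) \<and> (a = x \<or> b = y \<or> a - b = x - y \<or> a + b = x + y)"
  have "(a,b) \<in> {(x + i, y) | i. i \<noteq> 0} \<union> {(x, y + i) | i. i \<noteq> 0} \<union>
     {(x + i, y + i) | i. i \<noteq> 0} \<union> {(x + i, y - i) | i. i \<noteq> 0}"
  proof -
    consider "a = x" | "b = y" | "a - b = x - y" | "a + b = x + y" using h by blast
    then show ?thesis
    proof cases
      case 1 then have "b - y \<noteq> 0" "(a,b) = (x, y + (b - y))" using h by auto
      then show ?thesis by blast
    next
      case 2 then have "a - x \<noteq> 0" "(a,b) = (x + (a - x), y)" using h by auto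
      then show ?thesis by blast
    next
      case 3 then have "a - x \<noteq> 0" "(a,b) = (x + (a - x), y + (a - x))" using h by auto
      then show ?thesis by blast
    next
      case 4 then have "a - x \<noteq> 0" "(a,b) = (x + (a - x), y - (a - x))" using h by auto
      then show ?thesis by blast
    qed
  qed
  then show "(a,b) \<in> attacks (x,y)" unfolding attacks_def by simp
qed

lemma pair_bound:
  fixes x y x' y' a b :: int
  assumes ne: "(x,y) \<noteq> (x',y')" and na: "(x',y') \<notin> attacks (x,y)"
    and s1: "(a,b) \<in> attacks (x,y)" and s2: "(a,b) \<in> attacks (x',y')"
  shows "\<bar>a\<bar> \<le> 4*(\<bar>x\<bar>+\<bar>y\<bar>+\<bar>x'\<bar>+\<bar>y'\<bar>) \<and> \<bar>b\<bar> \<le> 4*(\<bar>x\<bar>+\<bar>y\<bar>+\<bar>x'\<bar>+\<bar>y'\<bar>)"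
proof -
  have L1: "a = x \<or> b = y \<or> a - b = x - y \<or> a + b = x + y"
    using s1 att_iff by blast
  have L2: "a = x' \<or> b = y' \<or> a - b = x' - y' \<or> a + b = x' + y'"
    using s2 att_iff by blast
  have N: "\<not> (x' = x \<or> y' = y \<or> x' - y' = x - y \<or> x' + y' = x + y)"
    using na ne att_iff[of x' y' x y] by auto
  have D1: "x' \<noteq> x" and D2: "y' \<noteq> y" and D3: "x' - y' \<noteq> x - y" and D4: "x' + y' \<noteq> x + y"
    using N by auto
  define M where "M = \<bar>x\<bar>+\<bar>y\<bar>+\<bar>x'\<bar>+\<bar>y'\<bar>"
  have B: "-M \<le> x" "x \<le> M" "-M \<le> y" "y \<le> M" "-M \<le> x'" "x' \<le> M" "-M \<le> y'" "y' \<le> M"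
    unfolding M_def by auto
  have "-4*M \<le> a \<and> a \<le> 4*M \<and> -4*M \<le> b \<and> b \<le> 4*M"
    using L1 L2 by (elim disjE) (use B D1 D2 D3 D4 in linarith)+
  then show ?thesis unfolding M_def[symmetric] by auto
qed

theorem mainTheorem4:
  fixes C :: "(int \<times> int) set"
  assumes "configuration C" and "non_attacking C"
  shows "\<exists>\<mu>::int. \<forall>n::nat. inloss n C \<le> \<mu>"
proof -
  have fin: "finite C" using assms(1) unfolding configuration_def .
  define K where "K = (\<Sum>Q\<in>C. \<bar>fst Q\<bar> + \<bar>snd Q\<bar>)"
  have K: "\<bar>fst Q\<bar> + \<bar>snd Q\<bar> \<le> K" if "Q \<in> C" for Q
    unfolding K_def using fin that
    by (intro member_le_sum) auto
  define Box where "Box = {-8*K..8*K} \<times> {-8*K..8*K}"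
  have finBox: "finite Box" unfolding Box_def by simp
  define c where "c = int (card C)"
  have box: "s \<in> Box" if "Q \<in> C" "Q' \<in> C" "Q \<noteq> Q'" "s \<in> attacks Q" "s \<in> attacks Q'" for s Q Q'
  proof -
    obtain x y where q: "Q = (x,y)" by fastforce
    obtain x' y' where q': "Q' = (x',y')" by fastforce
    obtain a b where ss: "s = (a,b)" by fastforce
    have "(x',y') \<notin> attacks (x,y)" using assms(2) that q q' unfolding non_attacking_def by blast
    then have "\<bar>a\<bar> \<le> 4*(\<bar>x\<bar>+\<bar>y\<bar>+\<bar>x'\<bar>+\<bar>y'\<bar>) \<and> \<bar>b\<bar> \<le> 4*(\<bar>x\<bar>+\<bar>y\<bar>+\<bar>x'\<bar>+\<bar>y'\<bar>)"
      using pair_bound[of x y x' y' a b] that q q' ss by auto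
    moreover have "\<bar>x\<bar>+\<bar>y\<bar> \<le> K" "\<bar>x'\<bar>+\<bar>y'\<bar> \<le> K" using K[OF that(1)] K[OF that(2)] q q' by auto
    ultimately show ?thesis unfolding Box_def ss by (simp add: abs_le_iff)
  qed
  have tm: "int (attacking_number C s) - 1 \<le> (if s \<in> Box then c else 0)"
    if "s \<in> attacked C" for s
  proof (cases "s \<in> Box")
    case True
    have "attacking_number C s \<le> card C" unfolding attacking_number_def
      using fin by (intro card_mono) auto
    then show ?thesis using True c_def by simp
  next
    case False
    have "card {Q \<in> C. s \<in> attacks Q} \<le> Suc 0"
    proof (rule card_le_Suc0_iff_eq[THEN iffD2])
      show "finite {Q \<in> C. s \<in> attacks Q}" using fin by simp
      show "\<forall>Q\<in>{Q \<in> C. s \<in> attacks Q}. \<forall>Q'\<in>{Q \<in> C. s \<in> attacks Q}. Q = Q'"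
        using box False by blast
    qed
    then show ?thesis using False unfolding attacking_number_def by simp
  qed
  show ?thesis
  proof (intro exI allI)
    fix n
    have finB: "finite (board n)" unfolding board_def I_set_def by simp
    let ?X = "attacked C \<inter> board n"
    have "inloss n C \<le> (\<Sum>s\<in>?X. (if s \<in> Box then c else 0))"
      unfolding inloss_def by (intro sum_mono tm) auto
    also have "\<dots> = (\<Sum>s\<in>?X \<inter> Box. c)"
      using finB by (subst sum.inter_restrict[symmetric]) auto
    also have "\<dots> = int (card (?X \<inter> Box)) * c" by simp
    also have "\<dots> \<le> int (card Box) * c"
      using finBox c_def by (intro mult_right_mono) (auto intro: card_mono)
    finally show "inloss n C \<le> int (card Box) * c" .
  qed
qed

end
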